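(* Let $(G;\gamma_0,\gamma_1,\gamma_2)$ be a regular hypermap, $H=\langle\gamma_1,\gamma_2\rangle$ and $K=\langle\gamma_2,\gamma_0\rangle$. Then the hyperedge-multiplicity of its underlying hypergraph equals the index $\left|\bigcap_{x\in K}KH^x : K\right|$, where $H^x=x^{-1}Hx$.
   Context: A regular hypermap is identified with a triple $(G;\gamma_0,\gamma_1,\gamma_2)$ where $G$ is a finite group generated by three involutions $\gamma_0,\gamma_1,\gamma_2$. Put $H=\langle\gamma_1,\gamma_2\rangle$, $K=\langle\gamma_2,\gamma_0\rangle$. Hypervertices are the right cosets $Hg$, hyperedges the right cosets $Kg$, and a hypervertex and a hyperedge are incident iff the cosets intersect. The hypervertices incident with the hyperedge $K$ are the cosets $Hx$, $x\in K$. The hyperedge-multiplicity is the number of hyperedges $Kg$ that are incident with every hypervertex incident with the hyperedge $K$ (by regularity this is the same for every hyperedge). The underlying hypergraph is called simple if its hyperedge-multiplicity is $1$. Note $\bigcap_{x\in K}KH^x$ is a union of right cosets of $K$. *)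

theory Defs
  imports "HOL-Algebra.Algebra"
begin

definition involution :: "('a, 'b) monoid_scheme \<Rightarrow> 'a \<Rightarrow> bool" where
  "involution G g \<longleftrightarrow> g \<in> carrier G \<and> g \<noteq> \<one>\<^bsub>G\<^esub> \<and> g \<otimes>\<^bsub>G\<^esub> g = \<one>\<^bsub>G\<^esub>"

definition regular_hypermap :: "('a, 'b) monoid_scheme \<Rightarrow> 'a \<Rightarrow> 'a \<Rightarrow> 'a \<Rightarrow> bool" where
  "regular_hypermap G g0 g1 g2 \<longleftrightarrow> group G \<and> finite (carrier G) \<and>
     involution G g0 \<and> involution G g1 \<and> involution G g2 \<and>
     generate G {g0, g1, g2} = carrier G"

text \<open>Hyperedge-multiplicity: number of hyperedges (right cosets K g) incident with
  every hypervertex H x, x in K, incident with the hyperedge K.\<close>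
definition hyperedge_multiplicity :: "('a, 'b) monoid_scheme \<Rightarrow> 'a \<Rightarrow> 'a \<Rightarrow> 'a \<Rightarrow> nat" where
  "hyperedge_multiplicity G g0 g1 g2 =
    (let H = generate G {g1, g2}; K = generate G {g2, g0} in
     card {E \<in> rcosets\<^bsub>G\<^esub> K. \<forall>x\<in>K. (H #>\<^bsub>G\<^esub> x) \<inter> E \<noteq> {}})"

definition conj_set :: "('a, 'b) monoid_scheme \<Rightarrow> 'a set \<Rightarrow> 'a \<Rightarrow> 'a set" where
  "conj_set G H x = (inv\<^bsub>G\<^esub> x) <#\<^bsub>G\<^esub> (H #>\<^bsub>G\<^esub> x)"

text \<open>Index |S : K| of K in a set S that is a union of right cosets of K.\<close>
definition set_index :: "'a set \<Rightarrow> 'a set \<Rightarrow> nat" where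
  "set_index S K = card S div card K"

end

theory Submission
  imports Defs
begin

lemma in_setmult: "k \<in> A \<Longrightarrow> y \<in> B \<Longrightarrow> k \<otimes>\<^bsub>G\<^esub> y \<in> A <#>\<^bsub>G\<^esub> B"
  unfolding set_mult_def by blast
lemma in_lcos: "y \<in> B \<Longrightarrow> a \<otimes>\<^bsub>G\<^esub> y \<in> a <#\<^bsub>G\<^esub> B"
  unfolding l_coset_def by blast
lemma in_rcos: "h \<in> H \<Longrightarrow> h \<otimes>\<^bsub>G\<^esub> a \<in> H #>\<^bsub>G\<^esub> a"
  unfolding r_coset_def by blast
lemma setmultE: "g \<in> A <#>\<^bsub>G\<^esub> B \<Longrightarrow> \<exists>k\<in>A. \<exists>y\<in>B. g = k \<otimes>\<^bsub>G\<^esub> y"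
  unfolding set_mult_def by blast
lemma lcosE: "g \<in> a <#\<^bsub>G\<^esub> B \<Longrightarrow> \<exists>y\<in>B. g = a \<otimes>\<^bsub>G\<^esub> y"
  unfolding l_coset_def by blast
lemma rcosE: "g \<in> H #>\<^bsub>G\<^esub> a \<Longrightarrow> \<exists>h\<in>H. g = h \<otimes>\<^bsub>G\<^esub> a"
  unfolding r_coset_def by blast

lemma (in group) c1: "x \<in> carrier G \<Longrightarrow> y \<in> carrier G \<Longrightarrow> x \<otimes> (inv x \<otimes> y) = y"
  by (metis inv_closed l_one m_assoc r_inv)
lemma (in group) c2: "x \<in> carrier G \<Longrightarrow> y \<in> carrier G \<Longrightarrow> inv x \<otimes> (x \<otimes> y) = y"
  by (metis inv_closed l_one m_assoc l_inv)

lemma (in group) key_mem: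
  assumes H: "subgroup H G" and K: "subgroup K G"
    and g: "g \<in> carrier G" and x: "x \<in> K"
  shows "(H #> x) \<inter> (K #> g) \<noteq> {} \<longleftrightarrow> g \<in> K <#> conj_set G H x"
proof -
  have xc: "x \<in> carrier G" by (rule subgroup.mem_carrier[OF K x])
  have Hc: "\<And>h. h \<in> H \<Longrightarrow> h \<in> carrier G" by (rule subgroup.mem_carrier[OF H])
  have Kc: "\<And>h. h \<in> K \<Longrightarrow> h \<in> carrier G" by (rule subgroup.mem_carrier[OF K])
  show ?thesis
  proof
    assume "(H #> x) \<inter> (K #> g) \<noteq> {}"
    then obtain z where z1: "z \<in> H #> x" and z2: "z \<in> K #> g" by blast
    obtain h where h: "h \<in> H" "z = h \<otimes> x" using rcosE[OF z1] by blast
    obtain k where k: "k \<in> K" "z = k \<otimes> g" using rcosE[OF z2] by blast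
    have hc: "h \<in> carrier G" and kc: "k \<in> carrier G" using h k Hc Kc by auto
    have e: "h \<otimes> x = k \<otimes> g" using h k by simp
    have "(inv k \<otimes> x) \<otimes> (inv x \<otimes> (h \<otimes> x)) = inv k \<otimes> (h \<otimes> x)"
      using hc kc xc by (simp add: m_assoc c1)
    also have "\<dots> = g" using e kc g by (simp add: c2)
    finally have eq: "g = (inv k \<otimes> x) \<otimes> (inv x \<otimes> (h \<otimes> x))" by simp
    have "inv k \<otimes> x \<in> K" using k x K
      by (simp add: subgroup.m_closed subgroup.m_inv_closed)
    moreover have "inv x \<otimes> (h \<otimes> x) \<in> conj_set G H x"
      unfolding conj_set_def by (intro in_lcos in_rcos h)
    ultimately show "g \<in> K <#> conj_set G H x"
      using eq in_setmult by metis
  next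
    assume a: "g \<in> K <#> conj_set G H x"
    obtain k y where k: "k \<in> K" and y: "y \<in> conj_set G H x" and gk: "g = k \<otimes> y"
      using setmultE[OF a] by blast
    obtain z where z: "z \<in> H #> x" "y = inv x \<otimes> z" using lcosE[OF y[unfolded conj_set_def]] by blast
    obtain h where h: "h \<in> H" "z = h \<otimes> x" using rcosE[OF z(1)] by blast
    have hc: "h \<in> carrier G" and kc: "k \<in> carrier G" using h k Hc Kc by auto
    have g': "g = k \<otimes> (inv x \<otimes> (h \<otimes> x))" using gk z h by simp
    have "inv (k \<otimes> inv x) \<otimes> g = (x \<otimes> inv k) \<otimes> (k \<otimes> (inv x \<otimes> (h \<otimes> x)))"
      using g' hc kc xc by (simp add: inv_mult_group)
    also have "\<dots> = h \<otimes> x" using hc kc xc by (simp add: m_assoc c1 c2)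
    finally have eq: "h \<otimes> x = inv (k \<otimes> inv x) \<otimes> g" by simp
    have "inv (k \<otimes> inv x) \<in> K" using k x K
      by (simp add: subgroup.m_closed subgroup.m_inv_closed)
    then have "h \<otimes> x \<in> K #> g" using eq in_rcos by metis
    moreover have "h \<otimes> x \<in> H #> x" using in_rcos h(1) by metis
    ultimately show "(H #> x) \<inter> (K #> g) \<noteq> {}" by blast
  qed
qed


lemma (in group) main_gen:
  assumes H: "subgroup H G" and K: "subgroup K G" and fin: "finite (carrier G)"
  shows "card {E \<in> rcosets K. \<forall>x\<in>K. (H #> x) \<inter> E \<noteq> {}}
       = card (\<Inter>x\<in>K. K <#> conj_set G H x) div card K"
proof -
  define S where "S = (\<Inter>x\<in>K. K <#> conj_set G H x)"
  have Kc: "\<And>h. h \<in> K \<Longrightarrow> h \<in> carrier G" by (rule subgroup.mem_carrier[OF K])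
  have Hc: "\<And>h. h \<in> H \<Longrightarrow> h \<in> carrier G" by (rule subgroup.mem_carrier[OF H])
  have one: "\<one> \<in> K" by (rule subgroup.one_closed[OF K])
  have Ssub: "S \<subseteq> carrier G"
  proof
    fix g assume "g \<in> S"
    then have a: "g \<in> K <#> conj_set G H \<one>" unfolding S_def using one by (rule INT_D)
    obtain k y where k: "k \<in> K" and y: "y \<in> conj_set G H \<one>" and gk: "g = k \<otimes> y"
      using setmultE[OF a] by blast
    obtain z where z: "z \<in> H #> \<one>" "y = inv \<one> \<otimes> z" using lcosE[OF y[unfolded conj_set_def]] by blast
    obtain h where h: "h \<in> H" "z = h \<otimes> \<one>" using rcosE[OF z(1)] by blast
    show "g \<in> carrier G" using gk z h Kc[OF k] Hc[OF h(1)] by simp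
  qed
  have memS: "\<And>g. g \<in> carrier G \<Longrightarrow> g \<in> S \<longleftrightarrow> (\<forall>x\<in>K. (H #> x) \<inter> (K #> g) \<noteq> {})"
    unfolding S_def using key_mem[OF H K] by simp
  have rc: "rcosets K = (\<lambda>g. K #> g) ` carrier G" unfolding RCOSETS_def by auto
  have eq: "{E \<in> rcosets K. \<forall>x\<in>K. (H #> x) \<inter> E \<noteq> {}} = (\<lambda>g. K #> g) ` S"
  proof
    show "{E \<in> rcosets K. \<forall>x\<in>K. (H #> x) \<inter> E \<noteq> {}} \<subseteq> (\<lambda>g. K #> g) ` S"
    proof
      fix E assume "E \<in> {E \<in> rcosets K. \<forall>x\<in>K. (H #> x) \<inter> E \<noteq> {}}"
      then have E1: "E \<in> rcosets K" and E2: "\<forall>x\<in>K. (H #> x) \<inter> E \<noteq> {}" by auto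
      obtain g where g: "g \<in> carrier G" "E = K #> g" using E1 rc by auto
      have "g \<in> S" using memS[OF g(1)] E2 g(2) by simp
      then show "E \<in> (\<lambda>g. K #> g) ` S" using g(2) by (rule rev_image_eqI)
    qed
    show "(\<lambda>g. K #> g) ` S \<subseteq> {E \<in> rcosets K. \<forall>x\<in>K. (H #> x) \<inter> E \<noteq> {}}"
    proof
      fix E assume "E \<in> (\<lambda>g. K #> g) ` S"
      then obtain g where g: "g \<in> S" "E = K #> g" by auto
      have gc: "g \<in> carrier G" using g(1) Ssub by auto
      have "E \<in> rcosets K" using rc gc g(2) by auto
      moreover have "\<forall>x\<in>K. (H #> x) \<inter> E \<noteq> {}" using memS[OF gc] g by simp
      ultimately show "E \<in> {E \<in> rcosets K. \<forall>x\<in>K. (H #> x) \<inter> E \<noteq> {}}" by simp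
    qed
  qed
  define C where "C = (\<lambda>g. K #> g) ` S"
  have Crc: "C \<subseteq> rcosets K" unfolding C_def rc using Ssub by auto
  have UC: "\<Union>C = S"
  proof
    show "S \<subseteq> \<Union>C"
    proof
      fix g assume gS: "g \<in> S"
      have gc: "g \<in> carrier G" using gS Ssub by auto
      have "\<one> \<otimes> g \<in> K #> g" using one by (rule in_rcos)
      then have "g \<in> K #> g" using gc by simp
      moreover have "K #> g \<in> C" unfolding C_def using gS by simp
      ultimately show "g \<in> \<Union>C" by (rule UnionI[rotated])
    qed
    show "\<Union>C \<subseteq> S"
    proof
      fix y assume "y \<in> \<Union>C"
      then obtain g where gS: "g \<in> S" and yg: "y \<in> K #> g" unfolding C_def by auto
      obtain k where k: "k \<in> K" and y: "y = k \<otimes> g" using rcosE[OF yg] by blast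
      have gc: "g \<in> carrier G" using gS Ssub by auto
      have yc: "y \<in> carrier G" using y gc Kc[OF k] by simp
      have "K #> y = K #> (k \<otimes> g)" using y by simp
      also have "\<dots> = (K #> k) #> g" using Kc[OF k] gc subgroup.subset[OF K]
        by (simp add: coset_mult_assoc)
      also have "\<dots> = K #> g" using subgroup.rcos_const[OF K is_group k] by simp
      finally have Kyg: "K #> y = K #> g" .
      show "y \<in> S" using memS[OF yc] memS[OF gc] gS Kyg by simp
    qed
  qed
  have fS: "finite S" using Ssub fin by (rule finite_subset)
  have fC: "finite C" unfolding C_def using fS by simp
  have cardc: "\<forall>c\<in>C. card c = card K"
  proof
    fix c assume "c \<in> C"
    then have "c \<in> rcosets K" using Crc by auto
    then show "card c = card K" using card_rcosets_equal[OF _ subgroup.subset[OF K]] by simp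
  qed
  have disj: "\<forall>c1\<in>C. \<forall>c2\<in>C. c1 \<noteq> c2 \<longrightarrow> c1 \<inter> c2 = {}"
  proof (intro ballI impI)
    fix c1 c2 assume a: "c1 \<in> C" "c2 \<in> C" "c1 \<noteq> c2"
    have "c1 \<in> rcosets K" "c2 \<in> rcosets K" using a Crc by auto
    then show "c1 \<inter> c2 = {}" using rcos_disjoint[OF K] a(3)
      unfolding disjoint_def pairwise_def disjnt_def by blast
  qed
  have fU: "finite (\<Union>C)" using UC fS by simp
  have "card K * card C = card (\<Union>C)"
    using cardc disj by (intro card_partition[OF fC fU]) auto
  then have cc: "card K * card C = card S" using UC by simp
  have fK: "finite K" using subgroup.subset[OF K] fin by (rule finite_subset)
  have "card K > 0" using one fK card_gt_0_iff by blast
  then have "card C = card S div card K" using cc by (metis nonzero_mult_div_cancel_left less_not_refl2)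
  then show ?thesis using eq unfolding C_def S_def by simp
qed

theorem mainTheorem2:
  fixes G :: "('a, 'b) monoid_scheme" and g0 g1 g2 :: 'a
  assumes "regular_hypermap G g0 g1 g2"
  shows "hyperedge_multiplicity G g0 g1 g2 =
    set_index (\<Inter>x\<in>generate G {g2, g0}.
                 generate G {g2, g0} <#>\<^bsub>G\<^esub> conj_set G (generate G {g1, g2}) x)
              (generate G {g2, g0})"
proof -
  have gr: "group G" and fin: "finite (carrier G)"
    and c: "g0 \<in> carrier G" "g1 \<in> carrier G" "g2 \<in> carrier G"
    using assms unfolding regular_hypermap_def involution_def by auto
  have H: "subgroup (generate G {g1, g2}) G"
    using group.generate_is_subgroup[OF gr] c by simp
  have K: "subgroup (generate G {g2, g0}) G"
    using group.generate_is_subgroup[OF gr] c by simp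
  show ?thesis
    unfolding hyperedge_multiplicity_def set_index_def Let_def
    by (rule group.main_gen[OF gr H K fin])
qed

end
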